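(* For every fixed $d>1$ there exists $L>0$ such that, with $p=d/n$, a.a.s. every set $S\subseteq V_n$ inducing a connected subgraph of $G_{n,p}$ with $|S|\ge\ln n$ satisfies $d(S)\le L|S|$.
   Context: $G_{n,p}$ is the random graph on $V_n=\{1,\dots,n\}$ with each possible edge present independently with probability $p$; a.a.s. means with probability tending to $1$; $d(S)=\sum_{v\in S}d(v)$ is the sum of the degrees in $G_{n,p}$ of the vertices of $S$. *)

theory Defs
  imports "HOL-Probability.Probability"
begin

text \<open>Vertex set V_n = {1..n}; a graph on V_n is the indicator function of its edge set,
  edges being 2-element subsets of V_n.\<close>

definition vpairs :: "nat \<Rightarrow> nat set set" where
  "vpairs n = {{u, v} | u v. u \<in> {1..n} \<and> v \<in> {1..n} \<and> u \<noteq> v}"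

definition gnp :: "nat \<Rightarrow> real \<Rightarrow> (nat set \<Rightarrow> bool) pmf" where
  "gnp n p = Pi_pmf (vpairs n) False (\<lambda>_. bernoulli_pmf p)"

definition adj :: "(nat set \<Rightarrow> bool) \<Rightarrow> nat \<Rightarrow> nat \<Rightarrow> bool" where
  "adj G u v \<longleftrightarrow> u \<noteq> v \<and> G {u, v}"

definition degree :: "nat \<Rightarrow> (nat set \<Rightarrow> bool) \<Rightarrow> nat \<Rightarrow> nat" where
  "degree n G v = card {u \<in> {1..n}. adj G u v}"

definition degsum :: "nat \<Rightarrow> (nat set \<Rightarrow> bool) \<Rightarrow> nat set \<Rightarrow> nat" where
  "degsum n G S = (\<Sum>v\<in>S. degree n G v)"

definition induces_connected :: "(nat set \<Rightarrow> bool) \<Rightarrow> nat set \<Rightarrow> bool" where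
  "induces_connected G S \<longleftrightarrow> S \<noteq> {} \<and>
     (\<forall>u\<in>S. \<forall>v\<in>S. (\<lambda>x y. x \<in> S \<and> y \<in> S \<and> adj G x y)\<^sup>*\<^sup>* u v)"

end

theory Submission
  imports Defs
begin


lemma pow_self_le_exp_fact: "real m ^ m \<le> exp (real m) * fact m"
proof (induction m)
  case 0 then show ?case by simp
next
  case (Suc m)
  have key: "(real m + 1) ^ m \<le> exp 1 * real m ^ m"
  proof (cases "m = 0")
    case True then show ?thesis by simp
  next
    case False
    then have mpos: "real m > 0" by simp
    have "(real m + 1) ^ m = real m ^ m * (1 + 1 / real m) ^ m"
      using mpos by (simp add: power_mult_distrib[symmetric] field_simps)
    also have "(1 + 1 / real m) ^ m \<le> exp (1 / real m) ^ m"
      by (intro power_mono) (auto simp: add.commute exp_ge_add_one_self)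
    also have "exp (1 / real m) ^ m = exp 1"
      using mpos by (simp add: exp_of_nat_mult[symmetric])
    finally show ?thesis using mpos by (simp add: mult.commute mult_left_mono)
  qed
  have "real (Suc m) ^ Suc m = (real m + 1) * (real m + 1) ^ m" by (simp add: add.commute)
  also have "\<dots> \<le> (real m + 1) * (exp 1 * real m ^ m)"
    by (intro mult_left_mono key) auto
  also have "\<dots> \<le> (real m + 1) * (exp 1 * (exp (real m) * fact m))"
    by (intro mult_left_mono Suc.IH) auto
  also have "\<dots> = exp (real (Suc m)) * fact (Suc m)"
    by (simp add: exp_add[symmetric] algebra_simps)
  finally show ?case .
qed

lemma binom_real_le: "real (N choose m) \<le> real N ^ m / fact m"
proof -
  have "(N choose m) * fact m \<le> N ^ m" by (rule binomial_fact_pow)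
  then have "real (N choose m) * fact m \<le> real N ^ m"
    by (metis of_nat_fact of_nat_le_iff of_nat_mult of_nat_power)
  then show ?thesis by (simp add: field_simps)
qed

lemma aux_pow: "(x::real) > 0 \<Longrightarrow> (d / x) ^ j * x ^ Suc j = d ^ j * x"
proof -
  assume x: "x > 0"
  have "(d / x) ^ j * x ^ j = d ^ j" using x by (simp add: power_mult_distrib[symmetric])
  then show ?thesis by (simp add: mult.assoc[symmetric])
qed

lemma aux_reorder: "(X * a) * (b * Y / C) * Q = a * b / C * (Q * (X * (Y::real)))"
  by (simp add: mult_ac)

lemma aux_final: "(a::real) * b / C * (x * (D1 * D2)) = x * (a * D1) * (b * D2 / C)"
  by (simp add: mult_ac)

lemma exp_nat: "exp (real k) = exp 1 ^ k"
  using exp_of_nat_mult[of k "1::real"] by simp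

lemma key_bound:
  fixes n k c N :: nat and d :: real
  assumes n: "n \<ge> 1" and k: "k \<ge> 1" and c: "c \<ge> 1" and d: "d \<ge> 1" and N: "N \<le> k * n"
  shows "real (n choose k) * real k ^ k * real (N choose (c*k)) * (d / real n) ^ (k + c*k - 1)
     \<le> real n * (exp 1 * d) ^ k * (exp 1 * d / real c) ^ (c*k)"
proof -
  define m where "m = c * k"
  have npos: "real n > 0" using n by simp
  have cpos: "real c > 0" using c by simp
  have A: "real (n choose k) * real k ^ k \<le> real n ^ k * exp (real k)"
  proof -
    have "real (n choose k) * real k ^ k \<le> (real n ^ k / fact k) * (exp (real k) * fact k)"
      by (intro mult_mono binom_real_le pow_self_le_exp_fact) auto
    also have "\<dots> = real n ^ k * exp (real k)" by simp
    finally show ?thesis .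
  qed
  have B: "real (N choose m) \<le> exp (real m) * real n ^ m / real c ^ m"
  proof -
    have "real (N choose m) \<le> real N ^ m / fact m" by (rule binom_real_le)
    also have "\<dots> \<le> (real k * real n) ^ m / fact m"
    proof (intro divide_right_mono power_mono)
      show "real N \<le> real k * real n" using N by (metis of_nat_le_iff of_nat_mult)
    qed auto
    also have "(real k * real n) ^ m = real m ^ m * real n ^ m / real c ^ m"
    proof -
      have "real m = real c * real k" by (simp add: m_def)
      then have "real m ^ m = real c ^ m * real k ^ m" by (simp add: power_mult_distrib)
      then show ?thesis using cpos by (simp add: power_mult_distrib)
    qed
    also have "\<dots> / fact m \<le> exp (real m) * fact m * real n ^ m / real c ^ m / fact m"
      by (intro divide_right_mono mult_right_mono pow_self_le_exp_fact) auto
    also have "\<dots> = exp (real m) * real n ^ m / real c ^ m" by simp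
    finally show ?thesis .
  qed
  have km: "k + m - 1 + 1 = k + m" using k by simp
  have P: "(d / real n) ^ (k + m - 1) * (real n ^ k * real n ^ m) \<le> real n * d ^ (k + m)"
  proof -
    have e1: "real n ^ k * real n ^ m = real n ^ Suc (k + m - 1)"
      using km by (simp add: power_add[symmetric])
    have "(d / real n) ^ (k + m - 1) * (real n ^ k * real n ^ m) = d ^ (k + m - 1) * real n"
      unfolding e1 using npos by (rule aux_pow)
    also have "\<dots> \<le> d ^ (k + m) * real n"
      using d npos by (intro mult_right_mono power_increasing) auto
    finally show ?thesis by (simp add: mult.commute)
  qed
  have "real (n choose k) * real k ^ k * real (N choose m) * (d / real n) ^ (k + m - 1)
      \<le> (real n ^ k * exp (real k)) * (exp (real m) * real n ^ m / real c ^ m) * (d / real n) ^ (k + m - 1)"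
    using d by (intro mult_mono A B) auto
  also have "\<dots> = exp (real k) * exp (real m) / real c ^ m * ((d / real n) ^ (k + m - 1) * (real n ^ k * real n ^ m))"
    by (rule aux_reorder)
  also have "\<dots> \<le> exp (real k) * exp (real m) / real c ^ m * (real n * d ^ (k + m))"
    using cpos by (intro mult_left_mono P) auto
  also have "\<dots> = exp (real k) * exp (real m) / real c ^ m * (real n * (d ^ k * d ^ m))"
    by (simp add: power_add)
  also have "\<dots> = real n * (exp (real k) * d ^ k) * (exp (real m) * d ^ m / real c ^ m)"
    by (rule aux_final)
  also have "\<dots> = real n * (exp 1 * d) ^ k * (exp 1 * d / real c) ^ m"
    by (simp add: exp_nat power_mult_distrib power_divide)
  finally show ?thesis by (simp add: m_def)
qed



definition incid :: "nat \<Rightarrow> nat set \<Rightarrow> nat set set" where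
  "incid n S = {e \<in> vpairs n. e \<inter> S \<noteq> {}}"

lemma finite_vpairs: "finite (vpairs n)"
proof -
  have "vpairs n \<subseteq> (\<lambda>(u,v). {u,v}) ` ({1..n} \<times> {1..n})"
    by (auto simp: vpairs_def)
  thus ?thesis by (rule finite_subset) auto
qed

lemma card_vpair_le: "e \<in> vpairs n \<Longrightarrow> card e \<le> 2"
  by (auto simp: vpairs_def card_insert_if)

lemma degree_eq:
  assumes v: "v \<in> {1..n}"
  shows "degree n G v = card {e \<in> vpairs n. G e \<and> v \<in> e}"
proof -
  have "bij_betw (\<lambda>u. {u, v}) {u \<in> {1..n}. adj G u v} {e \<in> vpairs n. G e \<and> v \<in> e}"
  proof (rule bij_betw_imageI)
    show "inj_on (\<lambda>u. {u, v}) {u \<in> {1..n}. adj G u v}"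
      by (rule inj_onI) (auto simp: doubleton_eq_iff)
    show "(\<lambda>u. {u, v}) ` {u \<in> {1..n}. adj G u v} = {e \<in> vpairs n. G e \<and> v \<in> e}"
    proof safe
      fix u assume "u \<in> {1..n}" "adj G u v"
      then show "{u, v} \<in> vpairs n" "G {u,v}" using v by (auto simp: vpairs_def adj_def)
    next
      fix e assume e: "e \<in> vpairs n" "G e" "v \<in> e"
      then obtain a b where ab: "e = {a,b}" "a \<in> {1..n}" "b \<in> {1..n}" "a \<noteq> b"
        by (auto simp: vpairs_def)
      show "e \<in> (\<lambda>u. {u, v}) ` {u \<in> {1..n}. adj G u v}"
      proof (cases "v = a")
        case True
        then show ?thesis using ab e by (auto simp: adj_def insert_commute intro!: image_eqI[of _ _ b])
      next
        case False
        then have "v = b" using ab e by auto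
        then show ?thesis using ab e by (auto simp: adj_def intro!: image_eqI[of _ _ a])
      qed
    qed
  qed
  then show ?thesis unfolding degree_def by (rule bij_betw_same_card)
qed

lemma degsum_le:
  assumes S: "S \<subseteq> {1..n}"
  shows "degsum n G S \<le> 2 * card {e \<in> incid n S. G e}"
proof -
  define E where "E = {e \<in> incid n S. G e}"
  have finE: "finite E" unfolding E_def incid_def using finite_vpairs by auto
  have finS: "finite S" using S finite_subset by blast
  have "degsum n G S = (\<Sum>v\<in>S. card {e \<in> E. v \<in> e})"
    unfolding degsum_def
  proof (rule sum.cong[OF refl])
    fix v assume v: "v \<in> S"
    have "{e \<in> vpairs n. G e \<and> v \<in> e} = {e \<in> E. v \<in> e}"
      using v by (auto simp: E_def incid_def)
    moreover have "v \<in> {1..n}" using v S by blast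
    ultimately show "degree n G v = card {e \<in> E. v \<in> e}" using degree_eq[of v n G] by simp
  qed
  also have "\<dots> = (\<Sum>v\<in>S. \<Sum>e\<in>E. if v \<in> e then 1 else 0)"
    using finE by (simp add: sum.If_cases Int_def conj_commute)
  also have "\<dots> = (\<Sum>e\<in>E. \<Sum>v\<in>S. if v \<in> e then 1 else 0)"
    by (rule sum.swap)
  also have "\<dots> = (\<Sum>e\<in>E. card (S \<inter> e))"
    using finS by (simp add: sum.If_cases Int_def)
  also have "\<dots> \<le> (\<Sum>e\<in>E. 2)"
  proof (rule sum_mono)
    fix e assume "e \<in> E"
    then have "e \<in> vpairs n" by (simp add: E_def incid_def)
    then have "finite e" "card e \<le> 2" by (auto simp: vpairs_def card_vpair_le)
    then show "card (S \<inter> e) \<le> 2" by (meson card_mono inf_le2 le_trans)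
  qed
  finally show ?thesis by (simp add: E_def mult.commute)
qed



definition tedges :: "nat set \<Rightarrow> (nat \<Rightarrow> nat) \<Rightarrow> nat set set" where
  "tedges S g = (\<lambda>v. {v, g v}) ` (S - {Min S})"

definition Fam :: "nat \<Rightarrow> nat \<Rightarrow> nat \<Rightarrow> nat set set set" where
  "Fam n c k = {F. F \<subseteq> vpairs n \<and> card F = k + c*k - 1 \<and>
     (\<exists>S g M. S \<subseteq> {1..n} \<and> card S = k \<and> g \<in> (PiE S (\<lambda>_. S)) \<and> M \<subseteq> incid n S \<and> card M = c*k
        \<and> F = tedges S g \<union> M)}"

lemma card_incid: assumes "S \<subseteq> {1..n}" shows "card (incid n S) \<le> card S * n"
proof -
  have fin: "finite S" using assms finite_subset by blast
  have "incid n S \<subseteq> (\<lambda>(v,u). {v,u}) ` (S \<times> {1..n})"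
  proof
    fix e assume "e \<in> incid n S"
    then obtain a b where ab: "e = {a,b}" "a \<in> {1..n}" "b \<in> {1..n}" and "e \<inter> S \<noteq> {}"
      by (auto simp: incid_def vpairs_def)
    then have "a \<in> S \<or> b \<in> S" by auto
    then show "e \<in> (\<lambda>(v,u). {v,u}) ` (S \<times> {1..n})"
      using ab by (auto simp: insert_commute)
  qed
  then have "card (incid n S) \<le> card ((\<lambda>(v,u). {v,u}) ` (S \<times> {1..n}))"
    by (intro card_mono) (auto simp: fin)
  also have "\<dots> \<le> card (S \<times> {1..n})" by (intro card_image_le) (simp add: fin)
  also have "\<dots> = card S * n" by (simp add: card_cartesian_product)
  finally show ?thesis .
qed

lemma finite_Fam: "finite (Fam n c k)"
proof -
  have "Fam n c k \<subseteq> Pow (vpairs n)" by (auto simp: Fam_def)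
  then show ?thesis using finite_vpairs[of n] by (simp add: finite_subset)
qed

lemma card_Fam: "card (Fam n c k) \<le> (n choose k) * k ^ k * ((k*n) choose (c*k))"
proof -
  define Ss where "Ss = {S. S \<subseteq> {1..n} \<and> card S = k}"
  define Ms where "Ms = (\<lambda>S. {M. M \<subseteq> incid n S \<and> card M = c*k})"
  define X where "X = (SIGMA S:Ss. (PiE S (\<lambda>_. S)) \<times> Ms S)"
  have finSs: "finite Ss" unfolding Ss_def by (rule finite_subset[of _ "Pow {1..n}"]) auto
  have finS: "S \<in> Ss \<Longrightarrow> finite S" for S unfolding Ss_def using finite_subset by blast
  have finI: "S \<in> Ss \<Longrightarrow> finite (incid n S)" for S
    unfolding incid_def using finite_vpairs by auto
  have finMs: "S \<in> Ss \<Longrightarrow> finite (Ms S)" for S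
    unfolding Ms_def using finI[of S] by auto
  have "Fam n c k \<subseteq> (\<lambda>(S,g,M). tedges S g \<union> M) ` X"
    unfolding Fam_def X_def Ss_def Ms_def by (auto simp: image_iff)
  then have "card (Fam n c k) \<le> card ((\<lambda>(S,g,M). tedges S g \<union> M) ` X)"
    by (intro card_mono finite_imageI) (auto simp: X_def finSs finS finMs finite_PiE)
  also have "\<dots> \<le> card X"
    by (intro card_image_le) (auto simp: X_def finSs finS finMs finite_PiE)
  also have "card X = (\<Sum>S\<in>Ss. card (PiE S (\<lambda>_. S)) * card (Ms S))"
    unfolding X_def by (subst card_SigmaI) (auto simp: finSs finS finMs finite_PiE card_cartesian_product)
  also have "\<dots> \<le> (\<Sum>S\<in>Ss. k ^ k * ((k*n) choose (c*k)))"
  proof (rule sum_mono)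
    fix S assume S: "S \<in> Ss"
    have "card (PiE S (\<lambda>_. S)) = k ^ k" using S finS[OF S] by (simp add: card_PiE Ss_def)
    moreover have "card (Ms S) = card (incid n S) choose (c*k)"
      unfolding Ms_def by (rule n_subsets[OF finI[OF S]])
    moreover have "card (incid n S) \<le> k * n" using card_incid[of S n] S by (simp add: Ss_def)
    ultimately show "card (PiE S (\<lambda>_. S)) * card (Ms S) \<le> k ^ k * ((k*n) choose (c*k))"
      by (simp add: binomial_right_mono)
  qed
  also have "\<dots> = (n choose k) * k ^ k * ((k*n) choose (c*k))"
    by (simp add: Ss_def n_subsets)
  finally show ?thesis .
qed



lemma prob_all_present:
  assumes F: "F \<subseteq> vpairs n" and p: "0 \<le> p" "p \<le> 1"
  shows "measure_pmf.prob (gnp n p) {G. \<forall>e\<in>F. G e} = p ^ card F"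
proof -
  have fin: "finite (vpairs n)" by (rule finite_vpairs)
  have eq: "{G. \<forall>e\<in>F. G e} = Pi (vpairs n) (\<lambda>e. if e \<in> F then {True} else UNIV)"
    using F by (auto simp: Pi_def)
  have "measure_pmf.prob (gnp n p) {G. \<forall>e\<in>F. G e}
     = (\<Prod>e\<in>vpairs n. measure_pmf.prob (bernoulli_pmf p) (if e \<in> F then {True} else UNIV))"
    unfolding eq gnp_def by (rule measure_Pi_pmf_Pi[OF fin])
  also have "\<dots> = (\<Prod>e\<in>vpairs n. if e \<in> F then p else 1)"
    by (rule prod.cong) (auto simp: measure_pmf_single p)
  also have "\<dots> = p ^ card F"
    using F fin by (simp add: prod.If_cases Int_absorb1)
  finally show ?thesis .
qed



lemma adj_sym: "adj G u v = adj G v u"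
  by (auto simp: adj_def insert_commute)

lemma tree_exists:
  assumes conn: "induces_connected G S" and fin: "finite S"
  defines "r \<equiv> Min S"
  shows "\<exists>g. (\<forall>v\<in>S - {r}. g v \<in> S \<and> adj G v (g v)) \<and> inj_on (\<lambda>v. {v, g v}) (S - {r})"
proof -
  define R where "R = (\<lambda>x y. x \<in> S \<and> y \<in> S \<and> adj G x y)"
  have ne: "S \<noteq> {}" using conn by (simp add: induces_connected_def)
  have rS: "r \<in> S" using ne fin by (simp add: r_def)
  have reach: "\<exists>j. (R ^^ j) r v" if v: "v \<in> S" for v
  proof -
    have "R\<^sup>*\<^sup>* r v" using conn rS v unfolding induces_connected_def R_def by blast
    then show ?thesis by (simp only: rtranclp_power)
  qed
  define h where "h = (\<lambda>v. LEAST j. (R ^^ j) r v)"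
  have ex: "\<exists>u. R u v \<and> h u < h v" if v: "v \<in> S - {r}" for v
  proof -
    obtain j where j: "(R ^^ j) r v" using reach v by blast
    have hv: "(R ^^ h v) r v" unfolding h_def by (rule LeastI, rule j)
    have "h v \<noteq> 0"
    proof
      assume "h v = 0"
      with hv have "r = v" by simp
      with v show False by simp
    qed
    then obtain j' where j': "h v = Suc j'" by (cases "h v") auto
    from hv have "((R ^^ j') OO R) r v" unfolding j' by (simp only: relpowp.simps)
    then obtain u where u1: "(R ^^ j') r u" and u2: "R u v" by (rule relcomppE)
    have "h u \<le> j'" unfolding h_def by (rule Least_le, rule u1)
    with j' u2 show ?thesis by (intro exI[of _ u]) simp
  qed
  define g where "g = (\<lambda>v. SOME u. R u v \<and> h u < h v)"
  have gp: "R (g v) v \<and> h (g v) < h v" if "v \<in> S - {r}" for v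
    unfolding g_def by (rule someI_ex, rule ex[OF that])
  show ?thesis
  proof (intro exI conjI ballI)
    fix v assume v: "v \<in> S - {r}"
    have "R (g v) v" using gp[OF v] by blast
    then have "g v \<in> S \<and> adj G (g v) v" unfolding R_def by blast
    then show "g v \<in> S" "adj G v (g v)" using adj_sym[of G v "g v"] by blast+
  next
    show "inj_on (\<lambda>v. {v, g v}) (S - {r})"
    proof (rule inj_onI)
      fix v w assume v: "v \<in> S - {r}" and w: "w \<in> S - {r}" and eq: "{v, g v} = {w, g w}"
      show "v = w"
      proof (rule ccontr)
        assume "v \<noteq> w"
        have "v \<in> {w, g w}" using eq by blast
        with \<open>v \<noteq> w\<close> have 1: "v = g w" by blast
        have "w \<in> {v, g v}" using eq by blast
        with \<open>v \<noteq> w\<close> have 2: "w = g v" by blast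
        have "h (g v) < h v" "h (g w) < h w" using gp[OF v] gp[OF w] by blast+
        with 1 2 show False by simp
      qed
    qed
  qed
qed



lemma bad_in_Fam:
  assumes S: "S \<subseteq> {1..n}" and conn: "induces_connected G S"
    and deg: "degsum n G S > 2 * (c + 1) * card S"
  shows "\<exists>F \<in> Fam n c (card S). \<forall>e\<in>F. G e"
proof -
  define k where "k = card S"
  define r where "r = Min S"
  have fin: "finite S" using S finite_subset by blast
  have ne: "S \<noteq> {}" using conn by (simp add: induces_connected_def)
  have rS: "r \<in> S" using fin ne by (simp add: r_def)
  have k1: "k \<ge> 1" using fin ne by (simp add: k_def Suc_le_eq card_gt_0_iff)
  obtain g where g: "\<forall>v\<in>S - {r}. g v \<in> S \<and> adj G v (g v)"
    and inj: "inj_on (\<lambda>v. {v, g v}) (S - {r})"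
    using tree_exists[OF conn fin] unfolding r_def by blast
  define g' where "g' = (\<lambda>v. if v \<in> S then (if v = r then r else g v) else undefined)"
  have g'P: "g' \<in> PiE S (\<lambda>_. S)" using g rS by (auto simp: g'_def PiE_def Pi_def extensional_def)
  define T where "T = tedges S g'"
  have T_eq: "T = (\<lambda>v. {v, g v}) ` (S - {r})"
    unfolding T_def tedges_def r_def[symmetric] by (rule image_cong) (auto simp: g'_def)
  have cardT: "card T = k - 1"
    unfolding T_eq using inj fin rS by (simp add: card_image k_def)
  define E where "E = {e \<in> incid n S. G e}"
  have finE: "finite E" unfolding E_def incid_def using finite_vpairs by auto
  have TE: "T \<subseteq> E"
  proof
    fix e assume "e \<in> T"
    then obtain v where v: "v \<in> S - {r}" "e = {v, g v}" unfolding T_eq by blast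
    with g have "g v \<in> S" "adj G v (g v)" by auto
    then have a1: "v \<noteq> g v \<and> G {v, g v}" unfolding adj_def by simp
    have a2: "v \<in> {1..n}" using v S by blast
    have a3: "g v \<in> {1..n}" using \<open>g v \<in> S\<close> S by blast
    note a = a1[THEN conjunct1] a1[THEN conjunct2] a2 a3
    then have "{v, g v} \<in> vpairs n" unfolding vpairs_def mem_Collect_eq by (intro exI[of _ v] exI[of _ "g v"]) simp
    then show "e \<in> E" using v a by (auto simp: E_def incid_def)
  qed
  have "2 * (c + 1) * k < 2 * card E"
    using deg degsum_le[OF S, of G] by (simp add: k_def E_def)
  then have cE: "(c + 1) * k < card E" by simp
  have "card (E - T) = card E - card T" using TE finE by (simp add: card_Diff_subset finite_subset)
  moreover have "(c + 1) * k = c * k + k" by simp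
  ultimately have "c * k \<le> card (E - T)" using cE cardT k1 by linarith
  then obtain M where M: "M \<subseteq> E - T" "card M = c * k"
    by (meson obtain_subset_with_card_n)
  define F where "F = T \<union> M"
  have finT: "finite T" using TE finE finite_subset by blast
  have finM: "finite M" by (rule finite_subset[OF _ finE]) (use M in auto)
  have cardF: "card F = k + c * k - 1"
    unfolding F_def using M cardT finT finM k1 by (subst card_Un_disjoint) auto
  have FE: "F \<subseteq> E" using TE M by (auto simp: F_def)
  have "F \<in> Fam n c k"
    unfolding Fam_def
  proof (intro CollectI conjI exI)
    show "F \<subseteq> vpairs n" using FE by (auto simp: E_def incid_def)
    show "card F = k + c * k - 1" by (rule cardF)
    show "S \<subseteq> {1..n}" "card S = k" "g' \<in> PiE S (\<lambda>_. S)" using S g'P by (auto simp: k_def)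
    show "M \<subseteq> incid n S" using M by (auto simp: E_def)
    show "card M = c * k" by (rule M(2))
    show "F = tedges S g' \<union> M" by (simp add: F_def T_def)
  qed
  moreover have "\<forall>e\<in>F. G e" using FE by (auto simp: E_def)
  ultimately show ?thesis by (auto simp: k_def)
qed



lemma c_bound:
  fixes d :: real
  assumes d: "d > 1"
  defines "c \<equiv> nat \<lceil>exp 2 * d\<rceil>"
  shows "c \<ge> 1" "0 \<le> exp 1 * d * (exp 1 * d / real c) ^ c"
    "exp 1 * d * (exp 1 * d / real c) ^ c \<le> exp (-3)"
proof -
  have e1: "exp (1::real) \<ge> 2" using exp_ge_add_one_self[of "1::real"] by simp
  have e2: "exp (2::real) = exp 1 * exp 1" by (simp add: exp_add[symmetric])
  have e2ge: "exp (2::real) \<ge> 4" unfolding e2 using e1 mult_mono[OF e1 e1] by simp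
  have cge: "real c \<ge> exp 2 * d" unfolding c_def by (rule real_nat_ceiling_ge)
  have "4 * d \<le> exp 2 * d" using e2ge d by (intro mult_right_mono) auto
  then have c4: "real c \<ge> 4 * d" using cge by linarith
  then show "c \<ge> 1" using d by simp
  have cpos: "real c > 0" using c4 d by simp
  show "0 \<le> exp 1 * d * (exp 1 * d / real c) ^ c" using d cpos by simp
  have r: "exp 1 * d / real c \<le> exp (-1)"
  proof -
    have "exp (-1) * real c \<ge> exp (-1) * (exp 2 * d)" using cge by (intro mult_left_mono) auto
    also have "exp (-1) * (exp 2 * d) = exp 1 * d"
      by (simp add: mult.assoc[symmetric] exp_add[symmetric])
    finally show ?thesis using cpos by (simp add: divide_le_eq mult.commute)
  qed
  have "(exp 1 * d / real c) ^ c \<le> exp (-1) ^ c"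
    using r d cpos by (intro power_mono) auto
  also have "exp (-1) ^ c = exp (- real c)" using exp_of_nat_mult[of c "-1::real"] by simp
  finally have "exp 1 * d * (exp 1 * d / real c) ^ c \<le> exp 1 * d * exp (- real c)"
    using d by (intro mult_left_mono) auto
  also have "exp 1 * d * exp (- real c) = exp (1 + ln d - real c)"
    using d by (simp add: exp_add exp_diff exp_minus divide_inverse)
  also have "\<dots> \<le> exp (-3)"
    using ln_le_minus_one[of d] d c4 by simp
  finally show "exp 1 * d * (exp 1 * d / real c) ^ c \<le> exp (-3)" .
qed

lemma bad_prob:
  fixes d :: real and c n :: nat
  assumes d: "d > 1" and c: "c \<ge> 1" and q0: "0 \<le> exp 1 * d * (exp 1 * d / real c) ^ c"
    and q3: "exp 1 * d * (exp 1 * d / real c) ^ c \<le> exp (-3)"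
    and n: "n \<ge> 1" and nd: "real n \<ge> d"
  shows "measure_pmf.prob (gnp n (d / real n))
     {G. \<exists>S. S \<subseteq> {1..n} \<and> induces_connected G S \<and> real (card S) \<ge> ln (real n)
                   \<and> \<not> real (degsum n G S) \<le> 2 * (real c + 1) * real (card S)} \<le> 1 / real n"
proof -
  define p where "p = d / real n"
  define q where "q = exp 1 * d * (exp 1 * d / real c) ^ c"
  have npos: "real n > 0" using n by simp
  have p0: "0 \<le> p" "p \<le> 1" using d nd npos by (auto simp: p_def)
  define K where "K = {k \<in> {1..n}. ln (real n) \<le> real k}"
  define A where "A = (\<lambda>kF::nat \<times> nat set set. {G. \<forall>e\<in>snd kF. G e})"
  define I where "I = Sigma K (Fam n c)"
  have finK: "finite K" by (simp add: K_def)
  have finI: "finite I" unfolding I_def using finK finite_Fam by auto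
  have sub: "{G. \<exists>S. S \<subseteq> {1..n} \<and> induces_connected G S \<and> real (card S) \<ge> ln (real n)
                   \<and> \<not> real (degsum n G S) \<le> 2 * (real c + 1) * real (card S)} \<subseteq> (\<Union>i\<in>I. A i)"
  proof
    fix G assume "G \<in> {G. \<exists>S. S \<subseteq> {1..n} \<and> induces_connected G S \<and> real (card S) \<ge> ln (real n)
                   \<and> \<not> real (degsum n G S) \<le> 2 * (real c + 1) * real (card S)}"
    then obtain S where S: "S \<subseteq> {1..n}" and conn: "induces_connected G S"
      and ln: "real (card S) \<ge> ln (real n)"
      and dg: "\<not> real (degsum n G S) \<le> 2 * (real c + 1) * real (card S)" by blast
    have "real (2 * (c + 1) * card S) = 2 * (real c + 1) * real (card S)" by (simp add: algebra_simps)
    then have "real (2 * (c + 1) * card S) < real (degsum n G S)" using dg by linarith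
    then have "degsum n G S > 2 * (c + 1) * card S" by linarith
    then obtain F where F: "F \<in> Fam n c (card S)" "\<forall>e\<in>F. G e"
      using bad_in_Fam[OF S conn] by blast
    have fin: "finite S" using S finite_subset by blast
    have ne: "S \<noteq> {}" using conn by (simp add: induces_connected_def)
    have "card S \<ge> 1" using fin ne by (simp add: Suc_le_eq card_gt_0_iff)
    moreover have "card S \<le> n" using card_mono[OF _ S] by simp
    ultimately have "card S \<in> K" using ln by (simp add: K_def)
    then have "(card S, F) \<in> I" using F by (simp add: I_def)
    moreover have "G \<in> A (card S, F)" using F by (simp add: A_def)
    ultimately show "G \<in> (\<Union>i\<in>I. A i)" by blast
  qed
  have "measure_pmf.prob (gnp n p) {G. \<exists>S. S \<subseteq> {1..n} \<and> induces_connected G S \<and> real (card S) \<ge> ln (real n)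
                   \<and> \<not> real (degsum n G S) \<le> 2 * (real c + 1) * real (card S)}
      \<le> measure_pmf.prob (gnp n p) (\<Union>i\<in>I. A i)"
    by (rule measure_pmf.finite_measure_mono[OF sub]) simp
  also have "\<dots> \<le> (\<Sum>i\<in>I. measure_pmf.prob (gnp n p) (A i))"
    by (rule measure_pmf.finite_measure_subadditive_finite[OF finI]) simp
  also have "\<dots> = (\<Sum>k\<in>K. \<Sum>F\<in>Fam n c k. measure_pmf.prob (gnp n p) (A (k, F)))"
  proof -
    have "(\<Sum>k\<in>K. \<Sum>F\<in>Fam n c k. measure_pmf.prob (gnp n p) (A (k, F)))
        = (\<Sum>(k,F)\<in>Sigma K (Fam n c). measure_pmf.prob (gnp n p) (A (k, F)))"
      by (rule sum.Sigma) (auto simp: finK finite_Fam)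
    then show ?thesis unfolding I_def case_prod_eta by simp
  qed
  also have "\<dots> = (\<Sum>k\<in>K. real (card (Fam n c k)) * p ^ (k + c*k - 1))"
  proof (rule sum.cong[OF refl])
    fix k assume "k \<in> K"
    have "(\<Sum>F\<in>Fam n c k. measure_pmf.prob (gnp n p) (A (k, F))) = (\<Sum>F\<in>Fam n c k. p ^ (k + c*k - 1))"
    proof (rule sum.cong[OF refl])
      fix F assume F: "F \<in> Fam n c k"
      have "F \<subseteq> vpairs n" "card F = k + c*k - 1" using F by (auto simp: Fam_def)
      then show "measure_pmf.prob (gnp n p) (A (k, F)) = p ^ (k + c*k - 1)"
        using prob_all_present[of F n p] p0 by (simp add: A_def)
    qed
    then show "(\<Sum>F\<in>Fam n c k. measure_pmf.prob (gnp n p) (A (k, F))) = real (card (Fam n c k)) * p ^ (k + c*k - 1)"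
      by simp
  qed
  also have "\<dots> \<le> (\<Sum>k\<in>K. 1 / real n ^ 2)"
  proof (rule sum_mono)
    fix k assume k: "k \<in> K"
    then have k1: "k \<ge> 1" and lnk: "ln (real n) \<le> real k" by (auto simp: K_def)
    have "real (card (Fam n c k)) * p ^ (k + c*k - 1)
        \<le> real ((n choose k) * k ^ k * ((k*n) choose (c*k))) * p ^ (k + c*k - 1)"
      by (rule mult_right_mono[OF of_nat_mono[OF card_Fam[of n c k]]]) (simp add: p0)
    also have "\<dots> = real (n choose k) * real k ^ k * real ((k*n) choose (c*k)) * (d / real n) ^ (k + c*k - 1)"
      by (simp add: p_def)
    also have "\<dots> \<le> real n * (exp 1 * d) ^ k * (exp 1 * d / real c) ^ (c*k)"
      by (rule key_bound) (use n k1 c d in auto)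
    also have "\<dots> = real n * q ^ k"
    proof -
      have "(exp 1 * d / real c) ^ (c*k) = ((exp 1 * d / real c) ^ c) ^ k" by (rule power_mult)
      then show ?thesis by (simp only: q_def power_mult_distrib mult.assoc)
    qed
    also have "\<dots> \<le> real n * exp (-3) ^ k"
      using q0 q3 npos by (intro mult_left_mono power_mono) (auto simp: q_def)
    also have "exp (-3) ^ k = exp (- 3 * real k)"
      using exp_of_nat_mult[of k "-3::real"] by (simp add: mult.commute)
    also have "\<dots> \<le> exp (- 3 * ln (real n))" using lnk by simp
    also have "exp (- 3 * ln (real n)) = 1 / real n ^ 3"
    proof -
      have "exp (3 * ln (real n)) = real n ^ 3"
        using exp_of_nat_mult[of 3 "ln (real n)"] npos by simp
      then show ?thesis by (simp add: exp_minus divide_inverse)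
    qed
    finally show "real (card (Fam n c k)) * p ^ (k + c*k - 1) \<le> 1 / real n ^ 2"
      using npos by (simp add: power_def power_eq_if)
  qed
  also have "\<dots> = real (card K) / real n ^ 2" by simp
  also have "\<dots> \<le> real n / real n ^ 2"
  proof -
    have "card K \<le> card {1..n}" unfolding K_def by (rule card_mono) auto
    then have "card K \<le> n" by simp
    then show ?thesis using npos by (intro divide_right_mono) auto
  qed
  also have "\<dots> = 1 / real n" using npos by (simp add: power2_eq_square)
  finally show ?thesis by (simp add: p_def)
qed

theorem lemma8:
  fixes d :: real
  assumes "d > 1"
  shows "\<exists>L > 0. (\<lambda>n. measure_pmf.prob (gnp n (d / real n))
            {G. \<forall>S. S \<subseteq> {1..n} \<and> induces_connected G S \<and> real (card S) \<ge> ln (real n)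
                   \<longrightarrow> real (degsum n G S) \<le> L * real (card S)}) \<longlonglongrightarrow> 1"
proof -
  define c where "c = nat \<lceil>exp 2 * d\<rceil>"
  note cb = c_bound[OF assms, folded c_def]
  define L where "L = 2 * (real c + 1)"
  have Lpos: "L > 0" by (simp add: L_def)
  define P where "P = (\<lambda>n. measure_pmf.prob (gnp n (d / real n))
            {G. \<forall>S. S \<subseteq> {1..n} \<and> induces_connected G S \<and> real (card S) \<ge> ln (real n)
                   \<longrightarrow> real (degsum n G S) \<le> L * real (card S)})"
  have low: "1 - 1 / real n \<le> P n" if n: "n \<ge> nat \<lceil>d\<rceil> + 1" for n
  proof -
    have n1: "n \<ge> 1" using n by simp
    have nd: "real n \<ge> d" using n real_nat_ceiling_ge[of d] by linarith
    define B where "B = {G. \<exists>S. S \<subseteq> {1..n} \<and> induces_connected G S \<and> real (card S) \<ge> ln (real n)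
                   \<and> \<not> real (degsum n G S) \<le> 2 * (real c + 1) * real (card S)}"
    have eq: "{G. \<forall>S. S \<subseteq> {1..n} \<and> induces_connected G S \<and> real (card S) \<ge> ln (real n)
                   \<longrightarrow> real (degsum n G S) \<le> L * real (card S)} = UNIV - B"
      by (auto simp: B_def L_def)
    have "P n = 1 - measure_pmf.prob (gnp n (d / real n)) B"
      unfolding P_def eq using measure_pmf.prob_compl[of B "gnp n (d / real n)"] by simp
    moreover have "measure_pmf.prob (gnp n (d / real n)) B \<le> 1 / real n"
      unfolding B_def by (rule bad_prob[OF assms cb n1 nd])
    ultimately show ?thesis by simp
  qed
  have up: "P n \<le> 1" for n unfolding P_def by (rule measure_pmf.prob_le_1)
  have "P \<longlonglongrightarrow> 1"
  proof (rule tendsto_sandwich[of "\<lambda>n. 1 - 1 / real n" P sequentially "\<lambda>n. 1"])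
    show "\<forall>\<^sub>F n in sequentially. 1 - 1 / real n \<le> P n"
      using low by (rule eventually_sequentiallyI)
    show "\<forall>\<^sub>F n in sequentially. P n \<le> 1" using up by simp
    show "(\<lambda>n. 1 - 1 / real n) \<longlonglongrightarrow> 1"
      using tendsto_diff[OF tendsto_const lim_1_over_n, of "1::real"] by simp
    show "(\<lambda>n. 1::real) \<longlonglongrightarrow> 1" by simp
  qed
  then show ?thesis using Lpos unfolding P_def by blast
qed

end
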